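(* Let $f$ be a finite sequence of positive integers. The following are equivalent: (1) $f$ is the face vector of a flag complex; (2) $f$ is the $h$-vector (with trailing zeros removed) of $\mathrm{Ind}(G^\pi)$ for some non-empty graph $G$ and some clique vertex-partition $\pi$ of $G$; (3) $f$ is the $h$-vector (with trailing zeros removed) of $\mathrm{Ind}(G^\tau)$ for some non-empty graph $G$, where $\tau$ is the trivial partition of $G$ (i.e. $G^\tau$ is the fully-whiskered graph).
   Context: A flag complex is a simplicial complex whose Stanley–Reisner ideal is generated by quadratic monomials, equivalently one of the form $\mathrm{Ind}(G)$, the complex of independent sets of a graph $G$. A clique vertex-partition of $G=(V,E)$ is a set $\pi=\{W_1,\ldots,W_t\}$ of pairwise disjoint (possibly empty) cliques of $G$ whose union is $V$; $G^\pi$ is the graph with vertex set $V\cup\{w_1,\ldots,w_t\}$ ($w_i$ new) and edge set $E\cup\{vw_i : v\in W_i\}$. The trivial partition of $G$ with $V=\{v_1,\ldots,v_n\}$ is $\tau=\{\{v_1\},\ldots,\{v_n\}\}$, so $G^\tau$ attaches a new degree-one vertex to each vertex of $G$. For a $(d-1)$-dimensional complex, the face vector is $(f_{-1},\ldots,f_{d-1})$, $f_i$ = number of faces with $i+1$ elements, and the $h$-vector is $(h_0,\ldots,h_d)$, $h_j=\sum_{i=0}^{j}(-1)^{j-i}\binom{d-i}{j-i}f_{i-1}$. *)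

theory Defs
  imports Main
begin

definition simplicial_complex :: "'a set \<Rightarrow> 'a set set \<Rightarrow> bool" where
  "simplicial_complex V \<Delta> \<longleftrightarrow> finite V \<and> {} \<in> \<Delta> \<and> (\<forall>\<sigma>\<in>\<Delta>. \<sigma> \<subseteq> V) \<and>
     (\<forall>\<sigma>\<in>\<Delta>. \<forall>\<tau>. \<tau> \<subseteq> \<sigma> \<longrightarrow> \<tau> \<in> \<Delta>)"

text \<open>Minimal non-faces = minimal generators of the Stanley--Reisner ideal.\<close>
definition minimal_nonface :: "'a set \<Rightarrow> 'a set set \<Rightarrow> 'a set \<Rightarrow> bool" where
  "minimal_nonface V \<Delta> \<sigma> \<longleftrightarrow> \<sigma> \<subseteq> V \<and> \<sigma> \<notin> \<Delta> \<and> (\<forall>\<tau>. \<tau> \<subset> \<sigma> \<longrightarrow> \<tau> \<in> \<Delta>)"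

text \<open>Flag complex: Stanley--Reisner ideal generated by quadratic monomials,
  i.e. every minimal non-face has exactly two elements.\<close>
definition flag_complex :: "'a set \<Rightarrow> 'a set set \<Rightarrow> bool" where
  "flag_complex V \<Delta> \<longleftrightarrow> simplicial_complex V \<Delta> \<and>
     (\<forall>\<sigma>. minimal_nonface V \<Delta> \<sigma> \<longrightarrow> card \<sigma> = 2)"

text \<open>d = (dimension + 1) = maximal cardinality of a face.\<close>
definition cx_d :: "'a set set \<Rightarrow> nat" where
  "cx_d \<Delta> = Max (card ` \<Delta>)"

text \<open>Number of faces with i elements, i.e. f_{i-1}.\<close>
definition nfaces :: "'a set set \<Rightarrow> nat \<Rightarrow> nat" where
  "nfaces \<Delta> i = card {\<sigma>\<in>\<Delta>. card \<sigma> = i}"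

text \<open>Face vector (f_{-1}, ..., f_{d-1}).\<close>
definition face_vector :: "'a set set \<Rightarrow> nat list" where
  "face_vector \<Delta> = map (nfaces \<Delta>) [0..<cx_d \<Delta> + 1]"

definition h_vector :: "'a set set \<Rightarrow> int list" where
  "h_vector \<Delta> = (let d = cx_d \<Delta> in
     map (\<lambda>j. \<Sum>i=0..j. (-1) ^ (j - i) * int ((d - i) choose (j - i)) * int (nfaces \<Delta> i))
         [0..<d + 1])"

definition strip_trailing_zeros :: "int list \<Rightarrow> int list" where
  "strip_trailing_zeros xs = rev (dropWhile (\<lambda>x. x = 0) (rev xs))"

definition simple_graph :: "'a set \<Rightarrow> 'a set set \<Rightarrow> bool" where
  "simple_graph V E \<longleftrightarrow> finite V \<and> (\<forall>e\<in>E. e \<subseteq> V \<and> card e = 2)"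

definition Ind :: "'a set \<Rightarrow> 'a set set \<Rightarrow> 'a set set" where
  "Ind V E = {S. S \<subseteq> V \<and> (\<forall>e\<in>E. \<not> e \<subseteq> S)}"

definition is_clique :: "'a set set \<Rightarrow> 'a set \<Rightarrow> bool" where
  "is_clique E W \<longleftrightarrow> (\<forall>u\<in>W. \<forall>v\<in>W. u \<noteq> v \<longrightarrow> {u, v} \<in> E)"

text \<open>A clique vertex-partition, given as the list [W_1, ..., W_t] of its
  (distinct, pairwise disjoint, possibly empty) cliques.\<close>
definition clique_vertex_partition :: "'a set \<Rightarrow> 'a set set \<Rightarrow> 'a set list \<Rightarrow> bool" where
  "clique_vertex_partition V E Ws \<longleftrightarrow> distinct Ws \<and>
     (\<forall>W\<in>set Ws. W \<subseteq> V \<and> is_clique E W) \<and>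
     (\<forall>i<length Ws. \<forall>j<length Ws. i \<noteq> j \<longrightarrow> Ws ! i \<inter> Ws ! j = {}) \<and>
     \<Union>(set Ws) = V"

text \<open>G^pi: old vertices Inl v, new vertices w_i = Inr i.\<close>
definition gpi_V :: "'a set \<Rightarrow> 'a set list \<Rightarrow> ('a + nat) set" where
  "gpi_V V Ws = Inl ` V \<union> Inr ` {..<length Ws}"

definition gpi_E :: "'a set set \<Rightarrow> 'a set list \<Rightarrow> ('a + nat) set set" where
  "gpi_E E Ws = (image Inl) ` E \<union> {{Inl v, Inr i} | v i. i < length Ws \<and> v \<in> Ws ! i}"

definition trivial_partition :: "'a::linorder set \<Rightarrow> 'a set list" where
  "trivial_partition V = map (\<lambda>v. {v}) (sorted_list_of_set V)"

end

theory Submission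
  imports Defs
begin



lemma neg1_pow_diff:
  assumes "k \<le> (m::nat)"
  shows "(-1::int)^(m-k) = (-1)^m * (-1)^k"
proof -
  have "(-1::int)^m = (-1)^(m-k) * (-1)^k" using assms by (simp flip: power_add)
  hence "(-1::int)^m * (-1)^k = (-1)^(m-k) * ((-1)^k * (-1)^k)" by (simp add: algebra_simps)
  also have "(-1::int)^k * (-1)^k = 1" by (simp flip: power_add add: power_mult_distrib[symmetric])
  finally show ?thesis by simp
qed

lemma alt_sum:
  "(\<Sum>k\<le>m. (-1::int)^(m-k) * int (m choose k)) = (if m = 0 then 1 else 0)"
proof (cases "m = 0")
  case True thus ?thesis by simp
next
  case False
  have "(\<Sum>k\<le>m. (-1::int)^(m-k) * int (m choose k)) = (-1)^m * (\<Sum>k\<le>m. (-1)^k * int (m choose k))"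
    by (simp add: sum_distrib_left neg1_pow_diff mult.assoc)
  also have "\<dots> = 0" using False choose_alternating_sum[of m] by simp
  finally show ?thesis using False by simp
qed

lemma arith_key:
  assumes "s \<le> t" "j \<le> (t::nat)"
  shows "(\<Sum>i=0..j. (-1::int)^(j-i) * int ((t-i) choose (j-i)) *
            int (if s \<le> i then (t-s) choose (i-s) else 0)) = (if s = j then 1 else 0)"
proof (cases "s \<le> j")
  case False
  thus ?thesis by (intro trans[OF sum.neutral]) auto
next
  case True
  define m where "m = j - s"
  define n where "n = t - s"
  have mn: "m \<le> n" using assms True by (simp add: m_def n_def)
  have "(\<Sum>i=0..j. (-1::int)^(j-i) * int ((t-i) choose (j-i)) *
            int (if s \<le> i then (t-s) choose (i-s) else 0))
      = (\<Sum>i=s..j. (-1::int)^(j-i) * int ((t-i) choose (j-i)) * int ((t-s) choose (i-s)))"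
  proof -
    have u: "{0..j} = {0..<s} \<union> {s..j}" using True by auto
    show ?thesis unfolding u by (subst sum.union_disjoint) auto
  qed
  also have "\<dots> = (\<Sum>k=0..m. (-1::int)^(j-(k+s)) * int ((t-(k+s)) choose (j-(k+s))) * int ((t-s) choose (k+s-s)))"
    using True sum.shift_bounds_cl_nat_ivl[of "\<lambda>i. (-1::int)^(j-i) * int ((t-i) choose (j-i)) * int ((t-s) choose (i-s))" 0 s m]
    by (simp add: m_def)
  also have "\<dots> = (\<Sum>k=0..m. (-1::int)^(m-k) * (int (n choose m) * int (m choose k)))"
  proof (rule sum.cong[OF refl])
    fix k assume k: "k \<in> {0..m}"
    have "(n choose k) * ((n - k) choose (m - k)) = (n choose m) * (m choose k)"
      using choose_mult[of k m n] k mn by simp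
    moreover have "j-(k+s) = m - k" "t-(k+s) = n - k" "k+s-s = k" using k True assms by (auto simp: m_def n_def)
    ultimately show "(-1::int)^(j-(k+s)) * int ((t-(k+s)) choose (j-(k+s))) * int ((t-s) choose (k+s-s))
        = (-1::int)^(m-k) * (int (n choose m) * int (m choose k))"
      by (simp add: n_def) (metis (no_types, opaque_lifting) mult.commute of_nat_mult)
  qed
  also have "\<dots> = int (n choose m) * (\<Sum>k\<le>m. (-1::int)^(m-k) * int (m choose k))"
    by (simp add: sum_distrib_left atLeast0AtMost algebra_simps)
  also have "\<dots> = (if s = j then 1 else 0)" unfolding alt_sum using True by (simp add: m_def)
  finally show ?thesis .
qed




lemma sum_decomp: "X = Inl ` (Inl -` X) \<union> Inr ` (Inr -` X)"
proof (rule set_eqI)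
  fix x show "x \<in> X \<longleftrightarrow> x \<in> Inl ` (Inl -` X) \<union> Inr ` (Inr -` X)" by (cases x) auto
qed

lemma cvp_unique:
  assumes "clique_vertex_partition V E Ws" "i < length Ws" "j < length Ws" "v \<in> Ws!i" "v \<in> Ws!j"
  shows "i = j"
  using assms unfolding clique_vertex_partition_def by blast

lemma cvp_exists:
  assumes "clique_vertex_partition V E Ws" "v \<in> V"
  shows "\<exists>i<length Ws. v \<in> Ws!i"
  using assms unfolding clique_vertex_partition_def by (metis UnionE in_set_conv_nth)

lemma card_hit:
  assumes cvp: "clique_vertex_partition V E Ws" and S: "S \<in> Ind V E"
  shows "card {j. j < length Ws \<and> Ws!j \<inter> S \<noteq> {}} = card S"
proof -
  have SV: "S \<subseteq> V" using S by (simp add: Ind_def)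
  obtain idx where idx: "\<And>v. v \<in> V \<Longrightarrow> idx v < length Ws \<and> v \<in> Ws!(idx v)"
    using cvp_exists[OF cvp] by metis
  have "bij_betw idx S {j. j < length Ws \<and> Ws!j \<inter> S \<noteq> {}}"
  proof (rule bij_betwI')
    fix u v assume u: "u \<in> S" and v: "v \<in> S"
    show "(idx u = idx v) = (u = v)"
    proof
      assume eq: "idx u = idx v"
      show "u = v"
      proof (rule ccontr)
        assume ne: "u \<noteq> v"
        have "Ws!(idx u) \<in> set Ws" using idx u SV by auto
        hence "is_clique E (Ws!(idx u))" using cvp by (simp add: clique_vertex_partition_def)
        hence "{u,v} \<in> E" using idx[of u] idx[of v] u v SV eq ne unfolding is_clique_def by auto
        moreover have "{u,v} \<subseteq> S" using u v by auto
        ultimately show False using S by (auto simp: Ind_def)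
      qed
    qed simp
  next
    fix v assume "v \<in> S" thus "idx v \<in> {j. j < length Ws \<and> Ws!j \<inter> S \<noteq> {}}" using idx SV by blast
  next
    fix j assume "j \<in> {j. j < length Ws \<and> Ws!j \<inter> S \<noteq> {}}"
    then obtain v where v: "v \<in> Ws!j" "v \<in> S" "j < length Ws" by auto
    have "idx v = j" using cvp_unique[OF cvp, of "idx v" j v] idx[of v] v SV by auto
    thus "\<exists>v\<in>S. j = idx v" using v by auto
  qed
  thus ?thesis by (simp add: bij_betw_same_card)
qed

definition freeS :: "'a set list \<Rightarrow> 'a set \<Rightarrow> nat set" where
  "freeS Ws S = {j. j < length Ws \<and> Ws!j \<inter> S = {}}"

lemma card_free:
  assumes cvp: "clique_vertex_partition V E Ws" and S: "S \<in> Ind V E"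
  shows "card (freeS Ws S) = length Ws - card S" and "card S \<le> length Ws"
proof -
  have eq: "freeS Ws S = {..<length Ws} - {j. j < length Ws \<and> Ws!j \<inter> S \<noteq> {}}"
    by (auto simp: freeS_def)
  have sub: "{j. j < length Ws \<and> Ws!j \<inter> S \<noteq> {}} \<subseteq> {..<length Ws}" by auto
  show "card (freeS Ws S) = length Ws - card S"
    unfolding eq by (subst card_Diff_subset) (auto simp: card_hit[OF cvp S])
  show "card S \<le> length Ws" using card_mono[OF _ sub] card_hit[OF cvp S] by simp
qed

lemma ball_setcompr2: "(\<forall>e\<in>{f v i | v i. P v i}. Q e) \<longleftrightarrow> (\<forall>v i. P v i \<longrightarrow> Q (f v i))"
  by blast

lemma gpi_mem:
  "(Inl ` S \<union> Inr ` T \<in> Ind (gpi_V V Ws) (gpi_E E Ws)) \<longleftrightarrow>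
     S \<in> Ind V E \<and> T \<subseteq> freeS Ws S"
proof -
  let ?X = "Inl ` S \<union> Inr ` T"
  have A: "?X \<subseteq> gpi_V V Ws \<longleftrightarrow> S \<subseteq> V \<and> T \<subseteq> {..<length Ws}"
    unfolding gpi_V_def by auto
  have B: "(\<forall>e\<in>(image Inl) ` E. \<not> e \<subseteq> ?X) \<longleftrightarrow> (\<forall>e\<in>E. \<not> e \<subseteq> S)"
  proof -
    have "\<And>e. (Inl ` e \<subseteq> ?X) = (e \<subseteq> S)" by auto
    thus ?thesis by simp
  qed
  have C2: "\<And>v i. {Inl v, Inr i} \<subseteq> ?X \<longleftrightarrow> v \<in> S \<and> i \<in> T" by auto
  have C: "(\<forall>e\<in>{{Inl v, Inr i} | v i. i < length Ws \<and> v \<in> Ws ! i}. \<not> e \<subseteq> ?X)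
       \<longleftrightarrow> (\<forall>i\<in>T. i < length Ws \<longrightarrow> Ws!i \<inter> S = {})" unfolding ball_setcompr2 C2 by auto
  have "?X \<in> Ind (gpi_V V Ws) (gpi_E E Ws) \<longleftrightarrow> ?X \<subseteq> gpi_V V Ws \<and>
     (\<forall>e\<in>(image Inl) ` E. \<not> e \<subseteq> ?X) \<and> (\<forall>e\<in>{{Inl v, Inr i} | v i. i < length Ws \<and> v \<in> Ws ! i}. \<not> e \<subseteq> ?X)"
    unfolding Ind_def gpi_E_def mem_Collect_eq ball_Un by (rule refl)
  also have "\<dots> \<longleftrightarrow> S \<in> Ind V E \<and> T \<subseteq> freeS Ws S"
    unfolding A B C Ind_def freeS_def by auto
  finally show ?thesis .
qed




lemma finite_Ind: "finite V \<Longrightarrow> finite (Ind V E)"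
  by (rule finite_subset[of _ "Pow V"]) (auto simp: Ind_def)

lemma nfaces_gpi:
  assumes sg: "simple_graph V E" and cvp: "clique_vertex_partition V E Ws"
  shows "nfaces (Ind (gpi_V V Ws) (gpi_E E Ws)) i =
     (\<Sum>S\<in>Ind V E. if card S \<le> i then (length Ws - card S) choose (i - card S) else 0)"
proof -
  let ?G = "Ind (gpi_V V Ws) (gpi_E E Ws)"
  let ?A = "Sigma (Ind V E) (\<lambda>S. {T. T \<subseteq> freeS Ws S \<and> card T + card S = i})"
  let ?g = "\<lambda>(S,T). Inl ` S \<union> Inr ` (T::nat set)"
  have finV: "finite V" using sg by (simp add: simple_graph_def)
  have finF: "finite (freeS Ws S)" for S by (simp add: freeS_def)
  have finS: "S \<in> Ind V E \<Longrightarrow> finite S" for S using finV by (auto simp: Ind_def intro: finite_subset)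
  have cardg: "card (Inl ` S \<union> Inr ` T) = card S + card T" if "finite S" "finite T" for S :: "'a set" and T :: "nat set"
    using that by (subst card_Un_disjoint) (auto simp: card_image)
  have bij: "bij_betw ?g ?A {X \<in> ?G. card X = i}"
  proof (rule bij_betw_imageI)
    show "inj_on ?g ?A"
    proof (rule inj_onI, clarify)
      fix S T S' T' assume "Inl ` S \<union> Inr ` T = Inl ` S' \<union> Inr ` (T'::nat set)"
      hence "Inl -` (Inl ` S \<union> Inr ` T) = Inl -` (Inl ` S' \<union> Inr ` T')"
        "Inr -` (Inl ` S \<union> Inr ` T) = Inr -` (Inl ` S' \<union> Inr ` T')" by simp_all
      thus "S = S' \<and> T = T'" by auto
    qed
    show "?g ` ?A = {X \<in> ?G. card X = i}"
    proof
      show "?g ` ?A \<subseteq> {X \<in> ?G. card X = i}"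
      proof (rule image_subsetI)
        fix p assume p: "p \<in> ?A"
        obtain S T where pST: "p = (S,T)" by (cases p)
        from p have S: "S \<in> Ind V E" and T: "T \<subseteq> freeS Ws S" "card T + card S = i"
          by (simp_all add: pST)
        have "finite T" using finF T(1) by (rule finite_subset[rotated])
        hence "card (Inl ` S \<union> Inr ` T) = i" using cardg[of S T] finS[OF S] T(2) by simp
        moreover have "Inl ` S \<union> Inr ` T \<in> ?G" using S T(1) by (simp add: gpi_mem)
        ultimately show "?g p \<in> {X \<in> ?G. card X = i}" by (simp add: pST)
      qed
      show "{X \<in> ?G. card X = i} \<subseteq> ?g ` ?A"
      proof (rule subsetI)
        fix X assume "X \<in> {X \<in> ?G. card X = i}"
        hence X: "X \<in> ?G" "card X = i" by auto
        let ?S = "Inl -` X" and ?T = "Inr -` X"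
        have eq: "X = Inl ` ?S \<union> Inr ` ?T" by (rule sum_decomp)
        have m: "?S \<in> Ind V E \<and> ?T \<subseteq> freeS Ws ?S" using X(1) eq gpi_mem[of ?S ?T V Ws E] by simp
        have "finite ?T" using finF m by (meson finite_subset)
        hence "card ?T + card ?S = i" using X(2) cardg[of ?S ?T] eq m finS by simp
        thus "X \<in> ?g ` ?A" using m eq by (intro image_eqI[of _ _ "(?S, ?T)"]) auto
      qed
    qed
  qed
  have "nfaces ?G i = card ?A" unfolding nfaces_def using bij by (simp add: bij_betw_same_card)
  also have "\<dots> = (\<Sum>S\<in>Ind V E. card {T. T \<subseteq> freeS Ws S \<and> card T + card S = i})"
    using finite_Ind[OF finV] finF by (subst card_SigmaI) (auto intro: finite_subset)
  also have "\<dots> = (\<Sum>S\<in>Ind V E. if card S \<le> i then (length Ws - card S) choose (i - card S) else 0)"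
  proof (rule sum.cong[OF refl])
    fix S assume S: "S \<in> Ind V E"
    show "card {T. T \<subseteq> freeS Ws S \<and> card T + card S = i} =
      (if card S \<le> i then (length Ws - card S) choose (i - card S) else 0)"
    proof (cases "card S \<le> i")
      case True
      hence "{T. T \<subseteq> freeS Ws S \<and> card T + card S = i} = {T. T \<subseteq> freeS Ws S \<and> card T = i - card S}" by auto
      thus ?thesis using True n_subsets[OF finF] card_free[OF cvp S] by simp
    next
      case False
      hence "{T. T \<subseteq> freeS Ws S \<and> card T + card S = i} = {}" by auto
      thus ?thesis using False by simp
    qed
  qed
  finally show ?thesis .
qed

lemma cx_d_gpi:
  assumes sg: "simple_graph V E" and cvp: "clique_vertex_partition V E Ws"
  shows "cx_d (Ind (gpi_V V Ws) (gpi_E E Ws)) = length Ws"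
proof -
  let ?G = "Ind (gpi_V V Ws) (gpi_E E Ws)"
  have finV: "finite V" using sg by (simp add: simple_graph_def)
  have finG: "finite ?G" by (rule finite_Ind) (simp add: gpi_V_def finV)
  have "{} \<in> Ind V E" using sg by (auto simp: Ind_def simple_graph_def)
  moreover have "{..<length Ws} \<subseteq> freeS Ws {}" by (auto simp: freeS_def)
  ultimately have "Inl ` {} \<union> Inr ` {..<length Ws} \<in> ?G" using gpi_mem[of "{}" "{..<length Ws}" V Ws E] by simp
  hence mem: "Inr ` {..<length Ws} \<in> ?G" by simp
  have le: "card X \<le> length Ws" if "X \<in> ?G" for X
  proof -
    let ?S = "Inl -` X" and ?T = "Inr -` X"
    have eq: "X = Inl ` ?S \<union> Inr ` ?T" by (rule sum_decomp)
    have m: "?S \<in> Ind V E \<and> ?T \<subseteq> freeS Ws ?S" using that eq gpi_mem[of ?S ?T V Ws E] by simp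
    have "card (Inl ` ?S \<union> Inr ` ?T) \<le> card (Inl ` ?S :: ('a+nat) set) + card (Inr ` ?T :: ('a+nat) set)" by (rule card_Un_le)
    hence "card X \<le> card (Inl ` ?S :: ('a+nat) set) + card (Inr ` ?T :: ('a+nat) set)" by (simp only: eq[symmetric])
    also have "\<dots> = card ?S + card ?T"
    proof -
      have "card (Inl ` ?S :: ('a+nat) set) = card ?S" by (rule card_image) simp
      moreover have "card (Inr ` ?T :: ('a+nat) set) = card ?T" by (rule card_image) simp
      ultimately show ?thesis by (simp only:)
    qed
    also have "card ?T \<le> card (freeS Ws ?S)" using m by (intro card_mono) (auto simp: freeS_def)
    finally show ?thesis using card_free[OF cvp, of ?S] m by simp
  qed
  show ?thesis unfolding cx_d_def
  proof (rule Max_eqI)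
    show "finite (card ` ?G)" using finG by simp
    show "y \<le> length Ws" if "y \<in> card ` ?G" for y using that le by auto
    show "length Ws \<in> card ` ?G" using mem by (intro image_eqI[of _ _ "Inr ` {..<length Ws}"]) (auto simp: card_image)
  qed
qed




lemma hvec_gpi:
  assumes sg: "simple_graph V E" and cvp: "clique_vertex_partition V E Ws"
  shows "h_vector (Ind (gpi_V V Ws) (gpi_E E Ws)) = map (\<lambda>j. int (nfaces (Ind V E) j)) [0..<length Ws + 1]"
proof -
  let ?t = "length Ws"
  have finV: "finite V" using sg by (simp add: simple_graph_def)
  have finI: "finite (Ind V E)" by (rule finite_Ind[OF finV])
  show ?thesis unfolding h_vector_def Let_def cx_d_gpi[OF sg cvp]
  proof (rule map_cong[OF refl])
    fix j assume "j \<in> set [0..<?t + 1]"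
    hence j: "j \<le> ?t" by auto
    have "(\<Sum>i=0..j. (-1)^(j-i) * int ((?t-i) choose (j-i)) * int (nfaces (Ind (gpi_V V Ws) (gpi_E E Ws)) i))
       = (\<Sum>i=0..j. \<Sum>S\<in>Ind V E. (-1::int)^(j-i) * int ((?t-i) choose (j-i)) *
             int (if card S \<le> i then (?t - card S) choose (i - card S) else 0))"
      by (simp only: nfaces_gpi[OF sg cvp] of_nat_sum sum_distrib_left)
    also have "\<dots> = (\<Sum>S\<in>Ind V E. \<Sum>i=0..j. (-1::int)^(j-i) * int ((?t-i) choose (j-i)) *
             int (if card S \<le> i then (?t - card S) choose (i - card S) else 0))"
      by (rule sum.swap)
    also have "\<dots> = (\<Sum>S\<in>Ind V E. if card S = j then 1 else 0)"
      by (rule sum.cong[OF refl], rule arith_key[OF card_free(2)[OF cvp] j]) 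
    also have "\<dots> = int (nfaces (Ind V E) j)"
      unfolding nfaces_def using finI by (simp add: sum.inter_filter[symmetric])
    finally show "(\<Sum>i=0..j. (-1)^(j-i) * int ((?t-i) choose (j-i)) * int (nfaces (Ind (gpi_V V Ws) (gpi_E E Ws)) i))
       = int (nfaces (Ind V E) j)" .
  qed
qed

lemma Ind_props:
  assumes sg: "simple_graph V E"
  shows "finite (Ind V E)" "{} \<in> Ind V E"
    "\<And>S T. S \<in> Ind V E \<Longrightarrow> T \<subseteq> S \<Longrightarrow> T \<in> Ind V E"
proof -
  have finV: "finite V" using sg by (simp add: simple_graph_def)
  show "finite (Ind V E)" by (rule finite_Ind[OF finV])
  show "{} \<in> Ind V E" using sg by (auto simp: Ind_def simple_graph_def)
  show "\<And>S T. S \<in> Ind V E \<Longrightarrow> T \<subseteq> S \<Longrightarrow> T \<in> Ind V E" unfolding Ind_def by blast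
qed

lemma nfaces_pos:
  assumes sg: "simple_graph V E" and j: "j \<le> cx_d (Ind V E)"
  shows "nfaces (Ind V E) j > 0"
proof -
  note P = Ind_props[OF sg]
  have "cx_d (Ind V E) \<in> card ` Ind V E" unfolding cx_d_def using P(1,2) by (intro Max_in) auto
  then obtain S where S: "S \<in> Ind V E" "card S = cx_d (Ind V E)" by auto
  have finS: "finite S" using S(1) sg by (auto simp: Ind_def simple_graph_def intro: finite_subset)
  obtain T where T: "T \<subseteq> S" "card T = j" using obtain_subset_with_card_n[of j S] S(2) j by auto
  have "T \<in> {X \<in> Ind V E. card X = j}" using P(3)[OF S(1) T(1)] T(2) by simp
  hence "{X \<in> Ind V E. card X = j} \<noteq> {}" by blast
  thus ?thesis unfolding nfaces_def using P(1) by (simp add: card_gt_0_iff)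
qed

lemma nfaces_zero:
  assumes sg: "simple_graph V E" and j: "j > cx_d (Ind V E)"
  shows "nfaces (Ind V E) j = 0"
proof -
  note P = Ind_props[OF sg]
  have "card X \<le> cx_d (Ind V E)" if "X \<in> Ind V E" for X
    unfolding cx_d_def using P(1) that by (intro Max_ge) auto
  hence e: "{X \<in> Ind V E. card X = j} = {}" using j by fastforce
  show ?thesis unfolding nfaces_def e by simp
qed

lemma strip_app:
  assumes "\<forall>x\<in>set ys. x = 0" "xs \<noteq> []" "last xs \<noteq> 0"
  shows "strip_trailing_zeros (xs @ ys) = xs"
proof -
  have r: "rev xs = last xs # rev (butlast xs)" using assms(2)
    by (metis append_butlast_last_id rev.simps(2) rev_rev_ident)
  have "dropWhile (\<lambda>x. x = 0) (rev ys @ rev xs) = dropWhile (\<lambda>x. x = 0) (rev xs)"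
    by (rule dropWhile_append2) (use assms(1) in auto)
  also have "\<dots> = rev xs" unfolding r using assms(3) by simp
  finally show ?thesis unfolding strip_trailing_zeros_def by simp
qed

lemma key:
  assumes sg: "simple_graph V E" and cvp: "clique_vertex_partition V E Ws"
  shows "strip_trailing_zeros (h_vector (Ind (gpi_V V Ws) (gpi_E E Ws))) = map int (face_vector (Ind V E))"
proof -
  let ?a = "cx_d (Ind V E)" and ?t = "length Ws" and ?n = "\<lambda>j. int (nfaces (Ind V E) j)"
  have "?a \<in> card ` Ind V E" unfolding cx_d_def using Ind_props[OF sg] by (intro Max_in) auto
  then obtain S where S: "S \<in> Ind V E" "card S = ?a" by auto
  have at: "?a \<le> ?t" using card_free(2)[OF cvp S(1)] S(2) by simp
  have split: "[0..<?t+1] = [0..<?a+1] @ [?a+1..<?t+1]" using upt_add_eq_append[of 0 "?a+1" "?t-?a"] at by simp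
  have "h_vector (Ind (gpi_V V Ws) (gpi_E E Ws)) = map ?n [0..<?a+1] @ map ?n [?a+1..<?t+1]"
    unfolding hvec_gpi[OF sg cvp] split by simp
  also have "strip_trailing_zeros \<dots> = map ?n [0..<?a+1]"
  proof (rule strip_app)
    show "\<forall>x\<in>set (map ?n [?a+1..<?t+1]). x = 0" using nfaces_zero[OF sg] by auto
    show "map ?n [0..<?a+1] \<noteq> []" by simp
    show "last (map ?n [0..<?a+1]) \<noteq> 0" using nfaces_pos[OF sg, of ?a] by simp
  qed
  finally show ?thesis by (simp add: face_vector_def)
qed




lemma flag_Ind:
  assumes sg: "simple_graph V E"
  shows "flag_complex V (Ind V E)"
proof -
  note P = Ind_props[OF sg]
  have sc: "simplicial_complex V (Ind V E)"
    unfolding simplicial_complex_def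
  proof (intro conjI ballI allI impI)
    show "finite V" using sg by (simp add: simple_graph_def)
    show "{} \<in> Ind V E" by (rule P(2))
    show "\<sigma> \<subseteq> V" if "\<sigma> \<in> Ind V E" for \<sigma> using that by (simp add: Ind_def)
    show "\<tau> \<in> Ind V E" if "\<sigma> \<in> Ind V E" "\<tau> \<subseteq> \<sigma>" for \<sigma> \<tau> by (rule P(3)[OF that])
  qed
  have "card \<sigma> = 2" if m: "minimal_nonface V (Ind V E) \<sigma>" for \<sigma>
  proof -
    from m have sV: "\<sigma> \<subseteq> V" and nI: "\<sigma> \<notin> Ind V E" and sub: "\<And>\<tau>. \<tau> \<subset> \<sigma> \<Longrightarrow> \<tau> \<in> Ind V E"
      by (auto simp: minimal_nonface_def)
    from sV nI obtain e where e: "e \<in> E" "e \<subseteq> \<sigma>" by (auto simp: Ind_def)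
    have "e = \<sigma>"
    proof (rule ccontr)
      assume "e \<noteq> \<sigma>"
      hence "e \<in> Ind V E" using sub e(2) by auto
      thus False using e(1) by (auto simp: Ind_def)
    qed
    thus ?thesis using e(1) sg by (auto simp: simple_graph_def)
  qed
  thus ?thesis using sc by (simp add: flag_complex_def)
qed

lemma exists_min_nonface:
  assumes "finite S"
  shows "S \<subseteq> V \<Longrightarrow> S \<notin> \<Delta> \<Longrightarrow> \<exists>\<sigma>\<subseteq>S. minimal_nonface V \<Delta> \<sigma>"
  using assms
proof (induction S rule: finite_psubset_induct)
  case (psubset S)
  show ?case
  proof (cases "\<forall>\<tau>. \<tau> \<subset> S \<longrightarrow> \<tau> \<in> \<Delta>")
    case True
    thus ?thesis using psubset.prems by (auto simp: minimal_nonface_def)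
  next
    case False
    then obtain \<tau> where "\<tau> \<subset> S" "\<tau> \<notin> \<Delta>" by auto
    moreover have "\<tau> \<subseteq> V" using \<open>\<tau> \<subset> S\<close> psubset.prems by auto
    ultimately obtain \<sigma> where "\<sigma> \<subseteq> \<tau>" "minimal_nonface V \<Delta> \<sigma>" using psubset.IH[of \<tau>] by auto
    thus ?thesis using \<open>\<tau> \<subset> S\<close> by (intro exI[of _ \<sigma>]) auto
  qed
qed

lemma flag_rep:
  assumes fl: "flag_complex V \<Delta>"
  shows "\<exists>E. simple_graph V E \<and> \<Delta> = Ind V E"
proof -
  define E where "E = {e. e \<subseteq> V \<and> card e = 2 \<and> e \<notin> \<Delta>}"
  have sc: "simplicial_complex V \<Delta>" and two: "\<And>\<sigma>. minimal_nonface V \<Delta> \<sigma> \<Longrightarrow> card \<sigma> = 2"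
    using fl by (auto simp: flag_complex_def)
  have finV: "finite V" and sub: "\<And>\<sigma>. \<sigma> \<in> \<Delta> \<Longrightarrow> \<sigma> \<subseteq> V"
    and cl: "\<And>\<sigma> \<tau>. \<sigma> \<in> \<Delta> \<Longrightarrow> \<tau> \<subseteq> \<sigma> \<Longrightarrow> \<tau> \<in> \<Delta>"
    using sc by (auto simp: simplicial_complex_def)
  have sg: "simple_graph V E" using finV by (auto simp: simple_graph_def E_def)
  have "\<Delta> = Ind V E"
  proof
    show "\<Delta> \<subseteq> Ind V E" using sub cl by (auto simp: Ind_def E_def)
    show "Ind V E \<subseteq> \<Delta>"
    proof
      fix S assume S: "S \<in> Ind V E"
      hence SV: "S \<subseteq> V" by (simp add: Ind_def)
      show "S \<in> \<Delta>"
      proof (rule ccontr)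
        assume "S \<notin> \<Delta>"
        then obtain \<sigma> where \<sigma>: "\<sigma> \<subseteq> S" "minimal_nonface V \<Delta> \<sigma>"
          using exists_min_nonface[OF finite_subset[OF SV finV] SV] by auto
        hence "\<sigma> \<in> E" using two[OF \<sigma>(2)] by (auto simp: E_def minimal_nonface_def)
        thus False using S \<sigma>(1) by (auto simp: Ind_def)
      qed
    qed
  qed
  thus ?thesis using sg by (intro exI[of _ E]) simp
qed

lemma triv_cvp:
  assumes "finite (V::'a::linorder set)"
  shows "clique_vertex_partition V E (trivial_partition V)"
proof -
  let ?xs = "sorted_list_of_set V"
  have d: "distinct ?xs" and s: "set ?xs = V" using assms by auto
  have "distinct (map (\<lambda>v. {v}) ?xs)" using d by (simp add: distinct_map inj_on_def)
  moreover have "\<forall>W\<in>set (map (\<lambda>v. {v}) ?xs). W \<subseteq> V \<and> is_clique E W"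
    using s by (auto simp: is_clique_def)
  moreover have "\<forall>i<length ?xs. \<forall>j<length ?xs. i \<noteq> j \<longrightarrow> {?xs!i} \<inter> {?xs!j} = {}"
    using d by (auto simp: nth_eq_iff_index_eq)
  moreover have "\<Union>(set (map (\<lambda>v. {v}) ?xs)) = V" using s by auto
  ultimately show ?thesis unfolding clique_vertex_partition_def trivial_partition_def by simp
qed

theorem theorem3p6:
  fixes f :: "nat list"
  assumes "\<forall>x\<in>set f. x > 0"
  shows "((\<exists>(V::nat set) \<Delta>. V \<noteq> {} \<and> flag_complex V \<Delta> \<and> f = face_vector \<Delta>)
           \<longleftrightarrow>
          (\<exists>(V::nat set) E Ws. simple_graph V E \<and> V \<noteq> {} \<and> clique_vertex_partition V E Ws \<and>
              map int f = strip_trailing_zeros (h_vector (Ind (gpi_V V Ws) (gpi_E E Ws)))))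
       \<and> ((\<exists>(V::nat set) E Ws. simple_graph V E \<and> V \<noteq> {} \<and> clique_vertex_partition V E Ws \<and>
              map int f = strip_trailing_zeros (h_vector (Ind (gpi_V V Ws) (gpi_E E Ws))))
           \<longleftrightarrow>
          (\<exists>(V::nat set) E. simple_graph V E \<and> V \<noteq> {} \<and>
              map int f = strip_trailing_zeros (h_vector (Ind (gpi_V V (trivial_partition V))
                                                              (gpi_E E (trivial_partition V))))))"
  (is "(?P1 \<longleftrightarrow> ?P2) \<and> (?P2 \<longleftrightarrow> ?P3)")
proof -
  have inj: "inj int" by (simp add: inj_def)
  have 13: "?P1 \<Longrightarrow> ?P3"
  proof -
    assume ?P1
    then obtain V :: "nat set" and \<Delta> where h: "V \<noteq> {}" "flag_complex V \<Delta>" "f = face_vector \<Delta>" by blast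
    obtain E where E: "simple_graph V E" "\<Delta> = Ind V E" using flag_rep[OF h(2)] by blast
    have "finite V" using E(1) by (simp add: simple_graph_def)
    hence "map int f = strip_trailing_zeros (h_vector (Ind (gpi_V V (trivial_partition V))
                                                              (gpi_E E (trivial_partition V))))"
      using key[OF E(1) triv_cvp] h(3) E(2) by simp
    thus ?P3 using E(1) h(1) by (intro exI[of _ V] exI[of _ E]) simp
  qed
  have 32: "?P3 \<Longrightarrow> ?P2"
  proof -
    assume ?P3
    then obtain V :: "nat set" and E where h: "simple_graph V E" "V \<noteq> {}"
      "map int f = strip_trailing_zeros (h_vector (Ind (gpi_V V (trivial_partition V))
                                                              (gpi_E E (trivial_partition V))))" by blast
    have "finite V" using h(1) by (simp add: simple_graph_def)
    thus ?P2 using h triv_cvp[of V E] by (intro exI[of _ V] exI[of _ E] exI[of _ "trivial_partition V"]) simp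
  qed
  have 21: "?P2 \<Longrightarrow> ?P1"
  proof -
    assume ?P2
    then obtain V :: "nat set" and E Ws where h: "simple_graph V E" "V \<noteq> {}" "clique_vertex_partition V E Ws"
      "map int f = strip_trailing_zeros (h_vector (Ind (gpi_V V Ws) (gpi_E E Ws)))" by blast
    have "map int f = map int (face_vector (Ind V E))" using h(4) key[OF h(1,3)] by simp
    hence "f = face_vector (Ind V E)" using inj_map_eq_map[OF inj] by simp
    thus ?P1 using h(2) flag_Ind[OF h(1)] by (intro exI[of _ V] exI[of _ "Ind V E"]) simp
  qed
  show ?thesis using 13 32 21 by (intro conjI iffI) auto
qed


end
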